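(* For $g\geq1$ and $d\geq2$, $\mathcal{S}_g[d]$ is the normal closure in $\mathrm{urSp}(2g)$ of $Y_{1,1}^d$.
   Context: $\mathrm{urSp}(2g)$ is the subgroup of $\mathrm{Sp}(2g,\mathbb{Z})$ (defined via $J=\begin{pmatrix}0&I_g\\-I_g&0\end{pmatrix}$) consisting of matrices $\begin{pmatrix}A&B\\0&{}^tA^{-1}\end{pmatrix}$ with $A\in\mathrm{GL}(g,\mathbb{Z})$ and $A^{-1}B$ symmetric. $\mathcal{S}_g=\left\{\begin{pmatrix}I_g&B\\0&I_g\end{pmatrix} : B\text{ integral symmetric}\right\}$, and $\mathcal{S}_g[d]$ is the kernel of the restriction to $\mathcal{S}_g$ of the reduction map $\mathrm{Sp}(2g,\mathbb{Z})\to\mathrm{Sp}(2g,\mathbb{Z}/d\mathbb{Z})$ (i.e. those with $B\equiv0\bmod d$). $Y_{1,1}=\begin{pmatrix}I_g&S_{1,1}\\0&I_g\end{pmatrix}$ where $S_{1,1}$ is the $g\times g$ matrix with $(1,1)$-entry $1$ and other entries $0$. *)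

theory Defs
  imports "Jordan_Normal_Form.Matrix" "HOL-Algebra.Generated_Groups"
begin

definition Jsympl :: "nat \<Rightarrow> int mat" where
  "Jsympl g = four_block_mat (0\<^sub>m g g) (1\<^sub>m g) (- 1\<^sub>m g) (0\<^sub>m g g)"

definition Sp :: "nat \<Rightarrow> int mat set" where
  "Sp g = {M. M \<in> carrier_mat (2*g) (2*g) \<and> transpose_mat M * Jsympl g * M = Jsympl g}"

definition urSp :: "nat \<Rightarrow> int mat set" where
  "urSp g = {M. M \<in> Sp g \<and>
     (\<exists>A Ai B. A \<in> carrier_mat g g \<and> Ai \<in> carrier_mat g g \<and> B \<in> carrier_mat g g \<and>
        A * Ai = 1\<^sub>m g \<and> Ai * A = 1\<^sub>m g \<and>
        transpose_mat (Ai * B) = Ai * B \<and>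
        M = four_block_mat A B (0\<^sub>m g g) (transpose_mat Ai))}"

definition Sg :: "nat \<Rightarrow> int mat set" where
  "Sg g = {four_block_mat (1\<^sub>m g) B (0\<^sub>m g g) (1\<^sub>m g) | B.
             B \<in> carrier_mat g g \<and> transpose_mat B = B}"

definition Sg_level :: "nat \<Rightarrow> int \<Rightarrow> int mat set" where
  "Sg_level g d = {M \<in> Sg g. \<forall>i < 2*g. \<forall>j < 2*g. M $$ (i,j) mod d = (1\<^sub>m (2*g) :: int mat) $$ (i,j) mod d}"

definition S11 :: "nat \<Rightarrow> int mat" where
  "S11 g = mat g g (\<lambda>(i,j). if i = 0 \<and> j = 0 then 1 else 0)"

definition Y11 :: "nat \<Rightarrow> int mat" where
  "Y11 g = four_block_mat (1\<^sub>m g) (S11 g) (0\<^sub>m g g) (1\<^sub>m g)"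

definition urSp_group :: "nat \<Rightarrow> int mat monoid" where
  "urSp_group g = \<lparr>carrier = urSp g, mult = (*), one = 1\<^sub>m (2*g)\<rparr>"

definition normal_closure :: "('a, 'b) monoid_scheme \<Rightarrow> 'a set \<Rightarrow> 'a set" where
  "normal_closure G S = generate G {h \<otimes>\<^bsub>G\<^esub> s \<otimes>\<^bsub>G\<^esub> inv\<^bsub>G\<^esub> h | h s. h \<in> carrier G \<and> s \<in> S}"

end

theory Submission
  imports Defs
begin


definition Tm :: "nat \<Rightarrow> int mat \<Rightarrow> int mat" where
  "Tm g B = four_block_mat (1\<^sub>m g) B (0\<^sub>m g g) (1\<^sub>m g)"

lemma z: "(0\<^sub>m g g :: 'a::semiring_1 mat) \<in> carrier_mat g g" by simp

lemma ut_mult: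
  fixes A B D :: "'a::comm_ring_1 mat"
  assumes c: "A \<in> carrier_mat g g" "B \<in> carrier_mat g g" "D \<in> carrier_mat g g"
    "A' \<in> carrier_mat g g" "B' \<in> carrier_mat g g" "D' \<in> carrier_mat g g"
  shows "four_block_mat A B (0\<^sub>m g g) D * four_block_mat A' B' (0\<^sub>m g g) D'
     = four_block_mat (A * A') (A * B' + B * D') (0\<^sub>m g g) (D * D')"
  using c by (simp add: mult_four_block_mat[OF c(1,2) z c(3) c(4,5) z c(6)])

lemma sp_ut:
  fixes A B D :: "int mat"
  assumes c: "A \<in> carrier_mat g g" "B \<in> carrier_mat g g" "D \<in> carrier_mat g g"
    and h1: "transpose_mat A * D = 1\<^sub>m g" and h2: "transpose_mat B * D = transpose_mat D * B"
  shows "four_block_mat A B (0\<^sub>m g g) D \<in> Sp g"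
proof -
  have t: "transpose_mat (four_block_mat A B (0\<^sub>m g g) D) = four_block_mat (transpose_mat A) (0\<^sub>m g g) (transpose_mat B) (transpose_mat D)"
    using c by (simp add: transpose_four_block_mat[OF c(1,2) z c(3)])
  have o: "1\<^sub>m g \<in> carrier_mat g g" "- 1\<^sub>m g \<in> carrier_mat g g" by auto
  have e1: "four_block_mat (transpose_mat A) (0\<^sub>m g g) (transpose_mat B) (transpose_mat D) * Jsympl g
      = four_block_mat (0\<^sub>m g g) (transpose_mat A) (- transpose_mat D) (transpose_mat B)"
    unfolding Jsympl_def using c
    by (subst mult_four_block_mat[OF _ z _ _ z o z], auto)
  have h3: "transpose_mat D * A = 1\<^sub>m g"
    using c h1 by (metis transpose_mult transpose_one transpose_transpose transpose_carrier_mat)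
  have e2: "four_block_mat (0\<^sub>m g g) (transpose_mat A) (- transpose_mat D) (transpose_mat B) * four_block_mat A B (0\<^sub>m g g) D
      = Jsympl g"
    unfolding Jsympl_def using c h1 h2 h3
    by (subst mult_four_block_mat[OF z _ _ _ c(1,2) z c(3)], auto)
  show ?thesis unfolding Sp_def using c
    by (simp add: t e1 e2 mult_2)
qed

lemma Tm_carrier: "B \<in> carrier_mat g g \<Longrightarrow> Tm g B \<in> carrier_mat (2*g) (2*g)"
  unfolding Tm_def by (metis four_block_carrier_mat one_carrier_mat mult_2)

lemma Tm_mult: assumes "B \<in> carrier_mat g g" "C \<in> carrier_mat g g"
  shows "Tm g B * Tm g C = Tm g (B + C)"
  unfolding Tm_def using assms by (simp add: ut_mult comm_add_mat[of B g g C])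

lemma Tm_zero: "Tm g (0\<^sub>m g g) = 1\<^sub>m (2*g)"
  unfolding Tm_def by (metis four_block_one_mat mult_2)

lemma urSpI:
  assumes "M \<in> Sp g" "A \<in> carrier_mat g g" "Ai \<in> carrier_mat g g" "B \<in> carrier_mat g g"
    "A * Ai = 1\<^sub>m g" "Ai * A = 1\<^sub>m g" "transpose_mat (Ai * B) = Ai * B"
    "M = four_block_mat A B (0\<^sub>m g g) (transpose_mat Ai)"
  shows "M \<in> urSp g"
  unfolding urSp_def using assms by blast

lemma Tm_urSp: assumes "B \<in> carrier_mat g g" "transpose_mat B = B"
  shows "Tm g B \<in> urSp g"
proof -
  have "Tm g B \<in> Sp g" unfolding Tm_def
    by (rule sp_ut) (use assms in auto)
  then show ?thesis unfolding Tm_def using assms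
    by (intro urSpI[of _ _ "1\<^sub>m g" "1\<^sub>m g" B]) auto
qed

lemma Dg_urSp: assumes c: "A \<in> carrier_mat g g" "Ai \<in> carrier_mat g g"
  and i: "A * Ai = 1\<^sub>m g" "Ai * A = 1\<^sub>m g"
  shows "four_block_mat A (0\<^sub>m g g) (0\<^sub>m g g) (transpose_mat Ai) \<in> urSp g"
proof -
  have "transpose_mat A * transpose_mat Ai = 1\<^sub>m g"
    using c i by (metis transpose_mult transpose_one)
  then have "four_block_mat A (0\<^sub>m g g) (0\<^sub>m g g) (transpose_mat Ai) \<in> Sp g"
    using c by (intro sp_ut) auto
  then show ?thesis using c i
    by (intro urSpI[of _ _ A Ai "0\<^sub>m g g"]) auto
qed

lemma urSp_carrier: "M \<in> urSp g \<Longrightarrow> M \<in> carrier_mat (2*g) (2*g)"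
  unfolding urSp_def Sp_def by auto

lemma conj_Tm:
  fixes A Ai B C :: "int mat"
  assumes c: "A \<in> carrier_mat g g" "Ai \<in> carrier_mat g g" "B \<in> carrier_mat g g" "C \<in> carrier_mat g g"
  and i: "Ai * A = 1\<^sub>m g"
  shows "four_block_mat A B (0\<^sub>m g g) (transpose_mat Ai) * Tm g C
       = Tm g (A * C * transpose_mat A) * four_block_mat A B (0\<^sub>m g g) (transpose_mat Ai)"
proof -
  have ti: "transpose_mat A * transpose_mat Ai = 1\<^sub>m g"
    using c i by (metis transpose_mult transpose_one)
  have "A * C * transpose_mat A * transpose_mat Ai = A * C * (transpose_mat A * transpose_mat Ai)"
    using c by (meson assoc_mult_mat mult_carrier_mat transpose_carrier_mat)
  also have "\<dots> = A * C" using c ti by simp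
  finally have e: "A * C * transpose_mat A * transpose_mat Ai = A * C" .
  have e2: "A * (C * transpose_mat A) * transpose_mat Ai = A * C"
  proof -
    have "A * (C * transpose_mat A) * transpose_mat Ai = A * ((C * transpose_mat A) * transpose_mat Ai)"
      by (rule assoc_mult_mat[of _ g g _ g _ g]) (use c in auto)
    also have "(C * transpose_mat A) * transpose_mat Ai = C * (transpose_mat A * transpose_mat Ai)"
      by (rule assoc_mult_mat[of _ g g _ g _ g]) (use c in auto)
    also have "\<dots> = C" using ti c by simp
    finally show ?thesis .
  qed
  show ?thesis unfolding Tm_def using c
    by (simp add: ut_mult e e2 comm_add_mat[of B g g "A*C"])
qed



lemma assoc5:
  fixes P Q R S T :: "'a::comm_ring_1 mat"
  assumes "P \<in> carrier_mat n n" "Q \<in> carrier_mat n n" "R \<in> carrier_mat n n" "S \<in> carrier_mat n n" "T \<in> carrier_mat n n"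
  shows "P * (Q * R * S) * T = (P * Q) * R * (S * T)"
proof -
  have c: "Q * R \<in> carrier_mat n n" "Q * R * S \<in> carrier_mat n n" "P * Q \<in> carrier_mat n n" "P * Q * R \<in> carrier_mat n n"
    using assms by auto
  have "P * (Q * R * S) * T = P * ((Q * R * S) * T)" using assms c by (intro assoc_mult_mat) auto
  also have "(Q * R * S) * T = Q * R * (S * T)" using assms c by (intro assoc_mult_mat) auto
  also have "P * (Q * R * (S * T)) = (P * (Q * R)) * (S * T)" using assms c by (intro assoc_mult_mat[symmetric]) auto
  also have "P * (Q * R) = P * Q * R" using assms c by (intro assoc_mult_mat[symmetric]) auto
  finally show ?thesis .
qed

lemma urSp_inv:
  assumes M: "M \<in> urSp g"
  shows "\<exists>N \<in> urSp g. M * N = 1\<^sub>m (2*g) \<and> N * M = 1\<^sub>m (2*g)"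
proof -
  obtain A Ai B where c: "A \<in> carrier_mat g g" "Ai \<in> carrier_mat g g" "B \<in> carrier_mat g g"
    and i: "A * Ai = 1\<^sub>m g" "Ai * A = 1\<^sub>m g" and s: "transpose_mat (Ai * B) = Ai * B"
    and Me: "M = four_block_mat A B (0\<^sub>m g g) (transpose_mat Ai)"
    and Ms: "M \<in> Sp g"
    using M unfolding urSp_def by blast
  define S where "S = Ai * B"
  have Sc: "S \<in> carrier_mat g g" using c S_def by simp
  have St: "transpose_mat S = S" using s S_def by simp
  have AS: "A * S = B"
  proof -
    have "A * S = (A * Ai) * B" unfolding S_def
      by (rule assoc_mult_mat[symmetric, of _ g g _ g _ g]) (use c in auto)
    then show ?thesis using i c by simp
  qed
  define X where "X = - (S * transpose_mat A)"
  have Xc: "X \<in> carrier_mat g g" using Sc c X_def by simp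
  define N where "N = four_block_mat Ai X (0\<^sub>m g g) (transpose_mat A)"
  have Nc: "N \<in> carrier_mat (2*g) (2*g)" unfolding N_def using c
    by (metis four_block_carrier_mat transpose_carrier_mat mult_2)
  have Mc: "M \<in> carrier_mat (2*g) (2*g)" using Ms unfolding Sp_def by simp
  have ti: "transpose_mat Ai * transpose_mat A = 1\<^sub>m g"
    using c i by (metis transpose_mult transpose_one)
  have ti2: "transpose_mat A * transpose_mat Ai = 1\<^sub>m g"
    using c i by (metis transpose_mult transpose_one)
  have AX: "A * X = - (B * transpose_mat A)"
  proof -
    have "A * X = - (A * (S * transpose_mat A))" unfolding X_def
      by (rule uminus_mult_right_mat) (use c Sc in auto)
    also have "A * (S * transpose_mat A) = (A * S) * transpose_mat A"
      by (rule assoc_mult_mat[symmetric, of _ g g _ g _ g]) (use c Sc in auto)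
    finally show ?thesis using AS by simp
  qed
  have MN: "M * N = 1\<^sub>m (2*g)"
  proof -
    have "M * N = four_block_mat (A * Ai) (A * X + B * transpose_mat A) (0\<^sub>m g g) (transpose_mat Ai * transpose_mat A)"
      unfolding Me N_def using c Xc by (simp add: ut_mult)
    also have "A * X + B * transpose_mat A = 0\<^sub>m g g" unfolding AX
      by (rule uminus_l_inv_mat) (use c in auto)
    finally have "M * N = four_block_mat (1\<^sub>m g) (0\<^sub>m g g) (0\<^sub>m g g) (1\<^sub>m g)"
      using i ti by simp
    then show ?thesis by (metis four_block_one_mat mult_2)
  qed
  have XA: "X * transpose_mat Ai = - S"
  proof -
    have "X * transpose_mat Ai = - ((S * transpose_mat A) * transpose_mat Ai)" unfolding X_def
      by (rule uminus_mult_left_mat) (use c Sc in auto)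
    also have "(S * transpose_mat A) * transpose_mat Ai = S * (transpose_mat A * transpose_mat Ai)"
      by (rule assoc_mult_mat[of _ g g _ g _ g]) (use c Sc in auto)
    finally show ?thesis using ti2 Sc by simp
  qed
  have NM: "N * M = 1\<^sub>m (2*g)"
  proof -
    have "N * M = four_block_mat (Ai * A) (Ai * B + X * transpose_mat Ai) (0\<^sub>m g g) (transpose_mat A * transpose_mat Ai)"
      unfolding Me N_def using c Xc by (simp add: ut_mult)
    also have "Ai * B + X * transpose_mat Ai = 0\<^sub>m g g" unfolding XA S_def[symmetric]
      using Sc by (metis comm_add_mat uminus_carrier_mat uminus_l_inv_mat)
    finally have "N * M = four_block_mat (1\<^sub>m g) (0\<^sub>m g g) (0\<^sub>m g g) (1\<^sub>m g)"
      using i ti2 by simp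
    then show ?thesis by (metis four_block_one_mat mult_2)
  qed
  have Jc: "Jsympl g \<in> carrier_mat (2*g) (2*g)" unfolding Jsympl_def
    by (metis four_block_carrier_mat zero_carrier_mat mult_2)
  have NSp: "N \<in> Sp g"
  proof -
    have MJ: "transpose_mat M * Jsympl g * M = Jsympl g" using Ms unfolding Sp_def by simp
    have tc: "transpose_mat M \<in> carrier_mat (2*g) (2*g)" "transpose_mat N \<in> carrier_mat (2*g) (2*g)"
      using Mc Nc by auto
    have "transpose_mat N * Jsympl g * N = transpose_mat N * (transpose_mat M * Jsympl g * M) * N"
      using MJ by simp
    also have "\<dots> = (transpose_mat N * transpose_mat M) * Jsympl g * (M * N)"
      by (rule assoc5[OF tc(2) tc(1) Jc Mc Nc])
    also have "transpose_mat N * transpose_mat M = transpose_mat (M * N)"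
      using Mc Nc by (simp add: transpose_mult[of M "2*g" "2*g" N "2*g"])
    also have "transpose_mat (M * N) * Jsympl g * (M * N) = Jsympl g" using MN Jc by simp
    finally show ?thesis unfolding Sp_def using Nc by simp
  qed
  have "transpose_mat (A * X) = A * X"
  proof -
    have "A * X = - (A * S * transpose_mat A)" using AX AS by simp
    moreover have "transpose_mat (A * S * transpose_mat A) = transpose_mat (transpose_mat A) * transpose_mat (A * S)"
      by (rule transpose_mult[of _ g g]) (use c Sc in auto)
    moreover have "transpose_mat (A * S) = transpose_mat S * transpose_mat A"
      by (rule transpose_mult[of _ g g]) (use c Sc in auto)
    ultimately have "transpose_mat (A * X) = - (A * (S * transpose_mat A))"
      using St by (simp add: transpose_uminus)
    also have "A * (S * transpose_mat A) = A * S * transpose_mat A"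
      by (rule assoc_mult_mat[symmetric, of _ g g _ g _ g]) (use c Sc in auto)
    finally show ?thesis using AX AS by simp
  qed
  then have "N \<in> urSp g" using NSp c i Xc
    by (intro urSpI[of _ _ Ai A X]) (auto simp: N_def)
  then show ?thesis using MN NM by blast
qed

lemma inv_eq:
  assumes "M \<in> urSp g" "N \<in> urSp g" "M * N = 1\<^sub>m (2*g)" "N * M = 1\<^sub>m (2*g)"
  shows "inv\<^bsub>urSp_group g\<^esub> M = N"
  unfolding m_inv_def urSp_group_def
proof (simp, rule the_equality)
  show "N \<in> urSp g \<and> M * N = 1\<^sub>m (2 * g) \<and> N * M = 1\<^sub>m (2 * g)" using assms by simp
next
  fix y assume y: "y \<in> urSp g \<and> M * y = 1\<^sub>m (2 * g) \<and> y * M = 1\<^sub>m (2 * g)"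
  have c: "M \<in> carrier_mat (2*g) (2*g)" "N \<in> carrier_mat (2*g) (2*g)" "y \<in> carrier_mat (2*g) (2*g)"
    using assms y urSp_carrier by auto
  have "y = (N * M) * y" using c assms by simp
  also have "\<dots> = N * (M * y)" using c by simp
  also have "\<dots> = N" using y c by simp
  finally show "y = N" .
qed



lemma conj_gen:
  assumes M: "M \<in> urSp g" and Me: "M = four_block_mat A B (0\<^sub>m g g) (transpose_mat Ai)"
    and c: "A \<in> carrier_mat g g" "Ai \<in> carrier_mat g g" "B \<in> carrier_mat g g" "X \<in> carrier_mat g g"
    and i: "Ai * A = 1\<^sub>m g"
  shows "M * Tm g X * inv\<^bsub>urSp_group g\<^esub> M = Tm g (A * X * transpose_mat A)"
proof -
  obtain N where N: "N \<in> urSp g" "M * N = 1\<^sub>m (2*g)" "N * M = 1\<^sub>m (2*g)"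
    using urSp_inv[OF M] by blast
  have inv: "inv\<^bsub>urSp_group g\<^esub> M = N" using inv_eq[OF M N] .
  have Mc: "M \<in> carrier_mat (2*g) (2*g)" "N \<in> carrier_mat (2*g) (2*g)"
    using M N urSp_carrier by auto
  have Yc: "Tm g (A * X * transpose_mat A) \<in> carrier_mat (2*g) (2*g)"
    using c by (intro Tm_carrier) auto
  have "M * Tm g X = Tm g (A * X * transpose_mat A) * M"
    unfolding Me by (rule conj_Tm[OF c i])
  then have "M * Tm g X * N = Tm g (A * X * transpose_mat A) * M * N" by simp
  also have "\<dots> = Tm g (A * X * transpose_mat A) * (M * N)"
    using Yc Mc by (intro assoc_mult_mat) auto
  also have "\<dots> = Tm g (A * X * transpose_mat A)" using N Yc by simp
  finally show ?thesis using inv by simp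
qed

lemma conj_S11:
  fixes A :: "int mat"
  assumes c: "A \<in> carrier_mat g g" and g: "g \<ge> 1"
  shows "A * (k \<cdot>\<^sub>m S11 g) * transpose_mat A = mat g g (\<lambda>(a,b). k * (A $$ (a,0) * A $$ (b,0)))"
proof -
  have 1: "A * (k \<cdot>\<^sub>m S11 g) = mat g g (\<lambda>(a,l). if l = 0 then k * A $$ (a,0) else 0)"
  proof (rule eq_matI)
    fix a l assume al: "a < dim_row (mat g g (\<lambda>(a,l). if l = 0 then k * A $$ (a,0) else 0))"
      "l < dim_col (mat g g (\<lambda>(a,l). if l = 0 then k * A $$ (a,0) else 0))"
    then have al': "a < g" "l < g" by auto
    have "(A * (k \<cdot>\<^sub>m S11 g)) $$ (a,l) = (\<Sum>i\<in>{0..<g}. A $$ (a,i) * (k * (if i = 0 \<and> l = 0 then 1 else 0)))"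
      using c al' by (simp add: S11_def scalar_prod_def)
    also have "\<dots> = (\<Sum>i\<in>{0..<g}. if i = 0 then (if l = 0 then k * A $$ (a,0) else 0) else 0)"
      by (rule sum.cong) auto
    also have "\<dots> = (if l = 0 then k * A $$ (a,0) else 0)" using g by simp
    finally show "(A * (k \<cdot>\<^sub>m S11 g)) $$ (a,l) = mat g g (\<lambda>(a,l). if l = 0 then k * A $$ (a,0) else 0) $$ (a,l)"
      using al' by simp
  qed (use c in \<open>auto simp: S11_def\<close>)
  show ?thesis unfolding 1
  proof (rule eq_matI)
    fix a b assume "a < dim_row (mat g g (\<lambda>(a,b). k * (A $$ (a,0) * A $$ (b,0))))"
      "b < dim_col (mat g g (\<lambda>(a,b). k * (A $$ (a,0) * A $$ (b,0))))"
    then have ab: "a < g" "b < g" by auto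
    have "(mat g g (\<lambda>(a,l). if l = 0 then k * A $$ (a,0) else 0) * transpose_mat A) $$ (a,b)
       = (\<Sum>i\<in>{0..<g}. (if i = 0 then k * A $$ (a,0) else 0) * A $$ (b,i))"
      using c ab by (simp add: scalar_prod_def)
    also have "\<dots> = (\<Sum>i\<in>{0..<g}. if i = 0 then k * A $$ (a,0) * A $$ (b,0) else 0)"
      by (rule sum.cong) auto
    also have "\<dots> = k * (A $$ (a,0) * A $$ (b,0))" using g by simp
    finally show "(mat g g (\<lambda>(a,l). if l = 0 then k * A $$ (a,0) else 0) * transpose_mat A) $$ (a,b)
       = mat g g (\<lambda>(a,b). k * (A $$ (a,0) * A $$ (b,0))) $$ (a,b)" using ab by simp
  qed (use c in auto)
qed

lemma S11_carrier: "S11 g \<in> carrier_mat g g" unfolding S11_def by simp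

lemma Y_pow: "Y11 g ^\<^sub>m n = Tm g (of_nat n \<cdot>\<^sub>m S11 g)"
proof (induction n)
  case 0
  have "(0::int) \<cdot>\<^sub>m S11 g = 0\<^sub>m g g" by (rule eq_matI) (auto simp: S11_def)
  then show ?case by (simp add: Tm_zero Y11_def mult_2)
next
  case (Suc n)
  have "Y11 g ^\<^sub>m Suc n = Y11 g ^\<^sub>m n * Y11 g" by simp
  also have "\<dots> = Tm g (of_nat n \<cdot>\<^sub>m S11 g) * Tm g (S11 g)" unfolding Suc.IH by (simp add: Y11_def Tm_def)
  also have "\<dots> = Tm g (of_nat n \<cdot>\<^sub>m S11 g + S11 g)" using S11_carrier by (intro Tm_mult) auto
  also have "of_nat n \<cdot>\<^sub>m S11 g + S11 g = (of_nat (Suc n) :: int) \<cdot>\<^sub>m S11 g"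
    by (rule eq_matI) (auto simp: S11_def algebra_simps)
  finally show ?case .
qed

lemma Sg_level_char:
  "Sg_level g d = {Tm g B | B. B \<in> carrier_mat g g \<and> transpose_mat B = B \<and> (\<forall>i<g. \<forall>j<g. d dvd B $$ (i,j))}"
proof (rule equalityI; rule subsetI)
  fix M assume M: "M \<in> Sg_level g d"
  then obtain B where B: "B \<in> carrier_mat g g" "transpose_mat B = B" and Me: "M = Tm g B"
    unfolding Sg_level_def Sg_def Tm_def by blast
  have "d dvd B $$ (i,j)" if ij: "i < g" "j < g" for i j
  proof -
    have "M $$ (i, j+g) mod d = (1\<^sub>m (2*g) :: int mat) $$ (i, j+g) mod d"
      using M ij unfolding Sg_level_def by auto
    moreover have "M $$ (i, j+g) = B $$ (i,j)" using ij B unfolding Me Tm_def by simp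
    moreover have "(1\<^sub>m (2*g) :: int mat) $$ (i, j+g) = 0" using ij by simp
    ultimately show ?thesis by (simp add: dvd_eq_mod_eq_0)
  qed
  then show "M \<in> {Tm g B | B. B \<in> carrier_mat g g \<and> transpose_mat B = B \<and> (\<forall>i<g. \<forall>j<g. d dvd B $$ (i,j))}"
    using B Me by blast
next
  fix M assume "M \<in> {Tm g B | B. B \<in> carrier_mat g g \<and> transpose_mat B = B \<and> (\<forall>i<g. \<forall>j<g. d dvd B $$ (i,j))}"
  then obtain B where B: "B \<in> carrier_mat g g" "transpose_mat B = B" "\<forall>i<g. \<forall>j<g. d dvd B $$ (i,j)" and Me: "M = Tm g B"
    by blast
  have "M \<in> Sg g" unfolding Sg_def Me Tm_def using B by blast
  moreover have "M $$ (i,j) mod d = (1\<^sub>m (2*g) :: int mat) $$ (i,j) mod d" if ij: "i < 2*g" "j < 2*g" for i j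
  proof -
    have "i < g \<Longrightarrow> \<not> j < g \<Longrightarrow> B $$ (i, j - g) mod d = 0"
      using B(3) ij by (simp add: dvd_eq_mod_eq_0[symmetric])
    then show ?thesis using ij B unfolding Me Tm_def by auto
  qed
  ultimately show "M \<in> Sg_level g d" unfolding Sg_level_def by blast
qed




definition good :: "nat \<Rightarrow> nat \<Rightarrow> int mat \<Rightarrow> bool" where
  "good g d B \<longleftrightarrow> B \<in> carrier_mat g g \<and> transpose_mat B = B \<and> (\<forall>i<g. \<forall>j<g. int d dvd B $$ (i,j))"

lemma urSp_group_simps[simp]: "carrier (urSp_group g) = urSp g" "mult (urSp_group g) = (*)"
  "one (urSp_group g) = 1\<^sub>m (2*g)"
  unfolding urSp_group_def by auto

lemma inv_Tm: assumes "B \<in> carrier_mat g g" "transpose_mat B = B"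
  shows "inv\<^bsub>urSp_group g\<^esub> (Tm g B) = Tm g (- B)"
proof -
  have z1: "B + - B = 0\<^sub>m g g" "- B + B = 0\<^sub>m g g" using assms by (auto intro!: eq_matI)
  show ?thesis
    using assms by (intro inv_eq Tm_urSp) (auto simp: Tm_mult z1 Tm_zero transpose_uminus)
qed

lemma H_form:
  assumes g: "g \<ge> 1" and x: "x \<in> {h \<otimes>\<^bsub>urSp_group g\<^esub> s \<otimes>\<^bsub>urSp_group g\<^esub> inv\<^bsub>urSp_group g\<^esub> h | h s.
      h \<in> carrier (urSp_group g) \<and> s \<in> {Y11 g ^\<^sub>m d}}"
  shows "\<exists>B. good g d B \<and> x = Tm g B"
proof -
  obtain h where h: "h \<in> urSp g" and xe: "x = h * Y11 g ^\<^sub>m d * inv\<^bsub>urSp_group g\<^esub> h"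
    using x by auto
  obtain A Ai B where c: "A \<in> carrier_mat g g" "Ai \<in> carrier_mat g g" "B \<in> carrier_mat g g"
    and i: "Ai * A = 1\<^sub>m g" and he: "h = four_block_mat A B (0\<^sub>m g g) (transpose_mat Ai)"
    using h unfolding urSp_def by blast
  have "x = Tm g (A * (int d \<cdot>\<^sub>m S11 g) * transpose_mat A)"
    unfolding xe Y_pow by (rule conj_gen[OF h he c(1-3) _ i]) (simp add: S11_carrier)
  also have "A * (int d \<cdot>\<^sub>m S11 g) * transpose_mat A = mat g g (\<lambda>(a,b). int d * (A $$ (a,0) * A $$ (b,0)))"
    by (rule conj_S11[OF c(1) g])
  finally have xe2: "x = Tm g (mat g g (\<lambda>(a,b). int d * (A $$ (a,0) * A $$ (b,0))))" .
  have "good g d (mat g g (\<lambda>(a,b). int d * (A $$ (a,0) * A $$ (b,0))))"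
    unfolding good_def by (auto intro!: eq_matI)
  then show ?thesis using xe2 by blast
qed

lemma forward:
  assumes g: "g \<ge> 1"
  shows "normal_closure (urSp_group g) {Y11 g ^\<^sub>m d} \<subseteq> Sg_level g (int d)"
proof
  fix x assume "x \<in> normal_closure (urSp_group g) {Y11 g ^\<^sub>m d}"
  then have "\<exists>B. good g d B \<and> x = Tm g B" unfolding normal_closure_def
  proof (induction rule: generate.induct)
    case one
    have "good g d (0\<^sub>m g g)" unfolding good_def by auto
    then show ?case using Tm_zero by auto
  next
    case (incl h)
    then show ?case using H_form[OF g] by blast
  next
    case (inv h)
    then obtain B where B: "good g d B" "h = Tm g B" using H_form[OF g] by blast
    then have "inv\<^bsub>urSp_group g\<^esub> h = Tm g (- B)" using inv_Tm unfolding good_def by blast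
    moreover have "good g d (- B)" using B(1) unfolding good_def by (auto simp: transpose_uminus)
    ultimately show ?case by blast
  next
    case (eng h1 h2)
    then obtain B1 B2 where B: "good g d B1" "h1 = Tm g B1" "good g d B2" "h2 = Tm g B2" by blast
    then have "h1 \<otimes>\<^bsub>urSp_group g\<^esub> h2 = Tm g (B1 + B2)" unfolding good_def by (simp add: Tm_mult)
    moreover have "good g d (B1 + B2)" using B unfolding good_def
      by (auto simp: transpose_add)
    ultimately show ?case by blast
  qed
  then show "x \<in> Sg_level g (int d)" unfolding Sg_level_char good_def by blast
qed




definition el :: "nat \<Rightarrow> nat \<Rightarrow> nat \<Rightarrow> int \<Rightarrow> int mat" where
  "el g l k c = mat g g (\<lambda>(a,b). (if a = b then 1 else 0) + (if a = l \<and> b = k then c else 0))"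

lemma el_carrier: "el g l k c \<in> carrier_mat g g" unfolding el_def by simp

lemma sum_two_deltas:
  fixes x y :: int and g :: nat
  shows "(\<Sum>m\<in>{0..<g}. (if m = a then x else 0) + (if m = b then y else 0))
     = (if a < g then x else 0) + (if b < g then y else 0)"
  by (simp only: sum.distrib sum.delta finite_atLeastLessThan) simp

lemma el_inv: assumes "l \<noteq> k" "l < g" "k < g"
  shows "el g l k c * el g l k (- c) = 1\<^sub>m g"
proof (rule eq_matI)
  fix a b assume "a < dim_row (1\<^sub>m g :: int mat)" "b < dim_col (1\<^sub>m g :: int mat)"
  then have ab: "a < g" "b < g" by auto
  have "(el g l k c * el g l k (- c)) $$ (a,b) = (\<Sum>m\<in>{0..<g}.
      ((if a = m then 1 else 0) + (if a = l \<and> m = k then c else 0)) *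
      ((if m = b then 1 else 0) + (if m = l \<and> b = k then - c else 0)))"
    using ab by (simp add: el_def scalar_prod_def)
  also have "\<dots> = (\<Sum>m\<in>{0..<g}. (if m = a then ((if a = b then 1 else 0) + (if a = l \<and> b = k then - c else 0)) else 0)
       + (if m = k then (if a = l then c * ((if k = b then 1 else 0)) else 0) else 0))"
    by (rule sum.cong) (use assms in auto)
  also have "\<dots> = (1\<^sub>m g :: int mat) $$ (a,b)"
    using ab assms by (simp only: sum_two_deltas) auto
  finally show "(el g l k c * el g l k (- c)) $$ (a,b) = (1\<^sub>m g :: int mat) $$ (a,b)" .
qed (auto simp: el_def)

lemma el_col: assumes "A \<in> carrier_mat g g" "a < g" "l < g" "k < g" "l \<noteq> k"
  shows "(el g l k c * A) $$ (a,0) = A $$ (a,0) + (if a = l then c * A $$ (k,0) else 0)"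
proof -
  have g: "0 < g" using assms by auto
  have "(el g l k c * A) $$ (a,0) = (\<Sum>m\<in>{0..<g}. ((if a = m then 1 else 0) + (if a = l \<and> m = k then c else 0)) * A $$ (m,0))"
    using assms g by (simp add: el_def scalar_prod_def)
  also have "\<dots> = (\<Sum>m\<in>{0..<g}. (if m = a then A $$ (a,0) else 0) + (if m = k then (if a = l then c * A $$ (k,0) else 0) else 0))"
    by (rule sum.cong) (use assms in auto)
  also have "\<dots> = A $$ (a,0) + (if a = l then c * A $$ (k,0) else 0)"
    using assms by (simp only: sum_two_deltas) auto
  finally show ?thesis .
qed

definition realized :: "nat \<Rightarrow> (nat \<Rightarrow> int) \<Rightarrow> bool" where
  "realized g v \<longleftrightarrow> (\<exists>A Ai. A \<in> carrier_mat g g \<and> Ai \<in> carrier_mat g g \<and> A * Ai = 1\<^sub>m g \<and> Ai * A = 1\<^sub>m g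
     \<and> (\<forall>a<g. A $$ (a,0) = v a))"

lemma real0: "g \<ge> 1 \<Longrightarrow> realized g (\<lambda>a. if a = 0 then 1 else 0)"
  unfolding realized_def by (rule exI[of _ "1\<^sub>m g"], rule exI[of _ "1\<^sub>m g"]) auto

lemma real_cong: "realized g v \<Longrightarrow> (\<And>a. a < g \<Longrightarrow> v a = w a) \<Longrightarrow> realized g w"
  unfolding realized_def by metis

lemma assoc4:
  fixes P Q R S :: "'a::comm_ring_1 mat"
  assumes "P \<in> carrier_mat n n" "Q \<in> carrier_mat n n" "R \<in> carrier_mat n n" "S \<in> carrier_mat n n"
  shows "P * Q * (R * S) = P * ((Q * R) * S)"
proof -
  have "P * Q * (R * S) = P * (Q * (R * S))" using assms by (intro assoc_mult_mat) auto
  also have "Q * (R * S) = (Q * R) * S" using assms by (intro assoc_mult_mat[symmetric]) auto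
  finally show ?thesis .
qed

lemma real_el:
  assumes r: "realized g v" and lk: "l < g" "k < g" "l \<noteq> k"
  shows "realized g (\<lambda>a. v a + (if a = l then c * v k else 0))"
proof -
  obtain A Ai where c: "A \<in> carrier_mat g g" "Ai \<in> carrier_mat g g" and i: "A * Ai = 1\<^sub>m g" "Ai * A = 1\<^sub>m g"
    and v: "\<forall>a<g. A $$ (a,0) = v a"
    using r unfolding realized_def by blast
  have E: "el g l k c \<in> carrier_mat g g" "el g l k (- c) \<in> carrier_mat g g" by (auto simp: el_carrier)
  have e1: "el g l k c * el g l k (- c) = 1\<^sub>m g" using el_inv[OF lk(3,1,2)] .
  have e2: "el g l k (- c) * el g l k c = 1\<^sub>m g" using el_inv[OF lk(3,1,2), of "- c"] by simp
  have p1: "(el g l k c * A) * (Ai * el g l k (- c)) = 1\<^sub>m g"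
    using c E by (simp only: assoc4[OF E(1) c(1) c(2) E(2)] i) (simp add: e1)
  have p2: "(Ai * el g l k (- c)) * (el g l k c * A) = 1\<^sub>m g"
    using c E by (simp only: assoc4[OF c(2) E(2) E(1) c(1)] e2) (simp add: i)
  have col: "\<forall>a<g. (el g l k c * A) $$ (a,0) = v a + (if a = l then c * v k else 0)"
    using el_col[OF c(1) _ lk(1,2,3)] v lk by simp
  show ?thesis unfolding realized_def
    by (rule exI[of _ "el g l k c * A"], rule exI[of _ "Ai * el g l k (- c)"])
      (use c E p1 p2 col in auto)
qed

lemma real_unit: assumes g: "g \<ge> 1" and i: "i < g" shows "realized g (\<lambda>a. if a = i then 1 else 0)"
proof (cases "i = 0")
  case True then show ?thesis using real0[OF g] by simp
next
  case False
  have g0: "0 < g" using g by simp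
  define v0 :: "nat \<Rightarrow> int" where "v0 = (\<lambda>a. if a = 0 then 1 else 0)"
  define v1 :: "nat \<Rightarrow> int" where "v1 = (\<lambda>a. v0 a + (if a = i then 1 * v0 0 else 0))"
  have r1: "realized g v1" unfolding v1_def v0_def by (rule real_el[OF real0[OF g] i g0 False])
  have r2: "realized g (\<lambda>a. v1 a + (if a = 0 then (-1) * v1 i else 0))"
    by (rule real_el[OF r1 g0 i]) (use False in auto)
  show ?thesis by (rule real_cong[OF r2]) (use False in \<open>auto simp: v1_def v0_def\<close>)
qed

lemma real_pair: assumes g: "g \<ge> 1" and ij: "i < g" "j < g" "i \<noteq> j"
  shows "realized g (\<lambda>a. (if a = i then 1 else 0) + (if a = j then 1 else 0))"
proof -
  have "realized g (\<lambda>a. (if a = i then 1 else 0) + (if a = j then 1 * (if i = i then 1 else 0) else 0))"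
    by (rule real_el[OF real_unit[OF g ij(1)] ij(2,1)]) (use ij in auto)
  then show ?thesis by (rule real_cong) auto
qed




abbreviation NC :: "nat \<Rightarrow> nat \<Rightarrow> int mat set" where
  "NC g d \<equiv> normal_closure (urSp_group g) {Y11 g ^\<^sub>m d}"

lemma q0: "Tm g (int d \<cdot>\<^sub>m 0\<^sub>m g g) \<in> NC g d"
proof -
  have "\<one>\<^bsub>urSp_group g\<^esub> \<in> NC g d" unfolding normal_closure_def by (rule generate.one)
  then show ?thesis by (simp add: Tm_zero)
qed

lemma qadd: assumes c: "C1 \<in> carrier_mat g g" "C2 \<in> carrier_mat g g"
  and q: "Tm g (int d \<cdot>\<^sub>m C1) \<in> NC g d" "Tm g (int d \<cdot>\<^sub>m C2) \<in> NC g d"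
  shows "Tm g (int d \<cdot>\<^sub>m (C1 + C2)) \<in> NC g d"
proof -
  have "Tm g (int d \<cdot>\<^sub>m C1) \<otimes>\<^bsub>urSp_group g\<^esub> Tm g (int d \<cdot>\<^sub>m C2) \<in> NC g d"
    using q unfolding normal_closure_def by (rule generate.eng)
  moreover have "Tm g (int d \<cdot>\<^sub>m C1) * Tm g (int d \<cdot>\<^sub>m C2) = Tm g (int d \<cdot>\<^sub>m (C1 + C2))"
  proof -
    have "Tm g (int d \<cdot>\<^sub>m C1) * Tm g (int d \<cdot>\<^sub>m C2) = Tm g (int d \<cdot>\<^sub>m C1 + int d \<cdot>\<^sub>m C2)"
      using c by (intro Tm_mult) auto
    also have "int d \<cdot>\<^sub>m C1 + int d \<cdot>\<^sub>m C2 = int d \<cdot>\<^sub>m (C1 + C2)"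
      using c by (intro eq_matI) (auto simp: algebra_simps)
    finally show ?thesis .
  qed
  ultimately show ?thesis by simp
qed

lemma qv: assumes g: "g \<ge> 1" and r: "realized g v" and s: "s = 1 \<or> s = -1"
  shows "Tm g (int d \<cdot>\<^sub>m mat g g (\<lambda>(a,b). s * (v a * v b))) \<in> NC g d"
proof -
  obtain A Ai where c: "A \<in> carrier_mat g g" "Ai \<in> carrier_mat g g" and i: "A * Ai = 1\<^sub>m g" "Ai * A = 1\<^sub>m g"
    and v: "\<forall>a<g. A $$ (a,0) = v a"
    using r unfolding realized_def by blast
  define h where "h = four_block_mat A (0\<^sub>m g g) (0\<^sub>m g g) (transpose_mat Ai)"
  have h: "h \<in> urSp g" unfolding h_def by (rule Dg_urSp[OF c i])
  define x where "x = h \<otimes>\<^bsub>urSp_group g\<^esub> Y11 g ^\<^sub>m d \<otimes>\<^bsub>urSp_group g\<^esub> inv\<^bsub>urSp_group g\<^esub> h"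
  have xH: "x \<in> {h \<otimes>\<^bsub>urSp_group g\<^esub> s \<otimes>\<^bsub>urSp_group g\<^esub> inv\<^bsub>urSp_group g\<^esub> h | h s.
      h \<in> carrier (urSp_group g) \<and> s \<in> {Y11 g ^\<^sub>m d}}"
    unfolding x_def using h by auto
  have "x = Tm g (A * (int d \<cdot>\<^sub>m S11 g) * transpose_mat A)"
    unfolding x_def Y_pow urSp_group_simps
    by (rule conj_gen[OF h h_def c(1,2)]) (auto simp: S11_carrier i)
  also have "A * (int d \<cdot>\<^sub>m S11 g) * transpose_mat A = mat g g (\<lambda>(a,b). int d * (A $$ (a,0) * A $$ (b,0)))"
    by (rule conj_S11[OF c(1) g])
  also have "\<dots> = int d \<cdot>\<^sub>m mat g g (\<lambda>(a,b). v a * v b)"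
    using v by (intro eq_matI) auto
  finally have xe: "x = Tm g (int d \<cdot>\<^sub>m mat g g (\<lambda>(a,b). v a * v b))" .
  show ?thesis using s
  proof
    assume s1: "s = 1"
    have "x \<in> NC g d" unfolding normal_closure_def by (rule generate.incl[OF xH])
    then show ?thesis using xe s1 by simp
  next
    assume s1: "s = -1"
    have "inv\<^bsub>urSp_group g\<^esub> x \<in> NC g d" unfolding normal_closure_def by (rule generate.inv[OF xH])
    moreover have "inv\<^bsub>urSp_group g\<^esub> x = Tm g (- (int d \<cdot>\<^sub>m mat g g (\<lambda>(a,b). v a * v b)))"
      unfolding xe by (rule inv_Tm) (auto intro!: eq_matI)
    moreover have "- (int d \<cdot>\<^sub>m mat g g (\<lambda>(a,b). v a * v b)) = int d \<cdot>\<^sub>m mat g g (\<lambda>(a,b). s * (v a * v b))"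
      using s1 by (intro eq_matI) auto
    ultimately show ?thesis by simp
  qed
qed




definition nsum :: "nat \<Rightarrow> int mat \<Rightarrow> nat" where
  "nsum g C = (\<Sum>p\<in>{0..<g}\<times>{0..<g}. nat \<bar>C $$ p\<bar>)"

lemma sgn_dec: "(x::int) \<noteq> 0 \<Longrightarrow> nat \<bar>x - sgn x\<bar> < nat \<bar>x\<bar>"
  by (cases "x > 0") (auto simp: sgn_if)

lemma sgn_pm: "(x::int) \<noteq> 0 \<Longrightarrow> sgn x = 1 \<or> sgn x = -1"
  by (auto simp: sgn_if)

lemma qR:
  assumes g: "g \<ge> 1" and ij: "i < g" "j < g" and s: "s = 1 \<or> s = -1"
  shows "Tm g (int d \<cdot>\<^sub>m mat g g (\<lambda>(a,b). if (a = i \<and> b = j) \<or> (a = j \<and> b = i) then s else 0)) \<in> NC g d"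
proof (cases "i = j")
  case True
  have "mat g g (\<lambda>(a,b). if (a = i \<and> b = j) \<or> (a = j \<and> b = i) then s else 0)
      = mat g g (\<lambda>(a,b). s * ((if a = i then 1 else 0) * (if b = i then 1 else 0)))"
    using True by (intro eq_matI) auto
  then show ?thesis using qv[OF g real_unit[OF g ij(1)] s] by simp
next
  case False
  have s': "- s = 1 \<or> - s = -1" using s by auto
  let ?R1 = "mat g g (\<lambda>(a,b). s * (((if a = i then 1 else 0) + (if a = j then 1 else 0)) * ((if b = i then 1 else 0) + (if b = j then 1 else 0))))"
  let ?R2 = "mat g g (\<lambda>(a,b). (- s) * ((if a = i then 1 else 0) * (if b = i then 1 else 0)))"
  let ?R3 = "mat g g (\<lambda>(a,b). (- s) * ((if a = j then 1 else 0) * (if b = j then 1 else 0)))"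
  have q1: "Tm g (int d \<cdot>\<^sub>m ?R1) \<in> NC g d" by (rule qv[OF g real_pair[OF g ij False] s])
  have q2: "Tm g (int d \<cdot>\<^sub>m ?R2) \<in> NC g d" by (rule qv[OF g real_unit[OF g ij(1)] s'])
  have q3: "Tm g (int d \<cdot>\<^sub>m ?R3) \<in> NC g d" by (rule qv[OF g real_unit[OF g ij(2)] s'])
  have q12: "Tm g (int d \<cdot>\<^sub>m (?R1 + ?R2)) \<in> NC g d" by (rule qadd[OF _ _ q1 q2]) auto
  have q123: "Tm g (int d \<cdot>\<^sub>m (?R1 + ?R2 + ?R3)) \<in> NC g d" by (rule qadd[OF _ _ q12 q3]) auto
  have "?R1 + ?R2 + ?R3 = mat g g (\<lambda>(a,b). if (a = i \<and> b = j) \<or> (a = j \<and> b = i) then s else 0)"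
    using False by (intro eq_matI) (auto simp: algebra_simps)
  then show ?thesis using q123 by simp
qed

lemma reverse_aux:
  assumes g: "g \<ge> 1"
  shows "C \<in> carrier_mat g g \<Longrightarrow> transpose_mat C = C \<Longrightarrow> Tm g (int d \<cdot>\<^sub>m C) \<in> NC g d"
proof (induction "nsum g C" arbitrary: C rule: less_induct)
  case less
  have sym: "C $$ (b,a) = C $$ (a,b)" if "a < g" "b < g" for a b
  proof -
    have "transpose_mat C $$ (a,b) = C $$ (b,a)" using that less.prems(1) by simp
    then have "C $$ (a,b) = C $$ (b,a)" unfolding less.prems(2) .
    then show ?thesis by simp
  qed
  show ?case
  proof (cases "\<exists>i<g. \<exists>j<g. C $$ (i,j) \<noteq> 0")
    case False
    then have "C = 0\<^sub>m g g" using less.prems by (intro eq_matI) auto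
    then show ?thesis using q0 by simp
  next
    case True
    then obtain i j where ij: "i < g" "j < g" "C $$ (i,j) \<noteq> 0" by blast
    define s where "s = sgn (C $$ (i,j))"
    define R where "R = mat g g (\<lambda>(a,b). if (a = i \<and> b = j) \<or> (a = j \<and> b = i) then s else 0)"
    define C' where "C' = mat g g (\<lambda>(a,b). C $$ (a,b) - R $$ (a,b))"
    have Rc: "R \<in> carrier_mat g g" "C' \<in> carrier_mat g g" unfolding R_def C'_def by auto
    have C'sym: "transpose_mat C' = C'"
      unfolding C'_def R_def by (intro eq_matI) (auto simp: sym)
    have CC: "C = C' + R" unfolding C'_def R_def using less.prems by (intro eq_matI) auto
    have lt: "nsum g C' < nsum g C" unfolding nsum_def
    proof (rule sum_strict_mono_ex1)
      show "finite ({0..<g} \<times> {0..<g})" by simp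
      show "\<forall>p\<in>{0..<g} \<times> {0..<g}. nat \<bar>C' $$ p\<bar> \<le> nat \<bar>C $$ p\<bar>"
      proof
        fix p assume p: "p \<in> {0..<g} \<times> {0..<g}"
        obtain a b where ab: "p = (a,b)" "a < g" "b < g" using p by auto
        show "nat \<bar>C' $$ p\<bar> \<le> nat \<bar>C $$ p\<bar>"
        proof (cases "(a = i \<and> b = j) \<or> (a = j \<and> b = i)")
          case True
          then have "C $$ (a,b) = C $$ (i,j)" using sym ij by auto
          moreover have "C' $$ (a,b) = C $$ (a,b) - s" unfolding C'_def R_def using ab True by auto
          ultimately have "nat \<bar>C' $$ p\<bar> = nat \<bar>C $$ (i,j) - s\<bar>" "nat \<bar>C $$ p\<bar> = nat \<bar>C $$ (i,j)\<bar>"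
            using ab by auto
          then show ?thesis using sgn_dec[OF ij(3)] unfolding s_def by linarith
        next
          case False
          then show ?thesis unfolding C'_def R_def using ab by auto
        qed
      qed
      have "C' $$ (i,j) = C $$ (i,j) - s" unfolding C'_def R_def using ij by auto
      then show "\<exists>p\<in>{0..<g} \<times> {0..<g}. nat \<bar>C' $$ p\<bar> < nat \<bar>C $$ p\<bar>"
        using sgn_dec[OF ij(3)] ij unfolding s_def by (intro bexI[of _ "(i,j)"]) auto
    qed
    have qC': "Tm g (int d \<cdot>\<^sub>m C') \<in> NC g d" by (rule less.hyps[OF lt Rc(2) C'sym])
    have qRR: "Tm g (int d \<cdot>\<^sub>m R) \<in> NC g d" unfolding R_def
      by (rule qR[OF g ij(1,2)]) (use sgn_pm[OF ij(3)] s_def in auto)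
    show ?thesis unfolding CC by (rule qadd[OF Rc(2) Rc(1) qC' qRR])
  qed
qed

theorem corollary3p9:
  fixes g :: nat and d :: nat
  assumes "g \<ge> 1" and "d \<ge> 2"
  shows "Sg_level g (int d) = normal_closure (urSp_group g) {Y11 g ^\<^sub>m d}"
proof (rule equalityI)
  show "normal_closure (urSp_group g) {Y11 g ^\<^sub>m d} \<subseteq> Sg_level g (int d)"
    by (rule forward[OF assms(1)])
next
  show "Sg_level g (int d) \<subseteq> normal_closure (urSp_group g) {Y11 g ^\<^sub>m d}"
  proof
    fix M assume "M \<in> Sg_level g (int d)"
    then obtain B where B: "B \<in> carrier_mat g g" "transpose_mat B = B" "\<forall>i<g. \<forall>j<g. int d dvd B $$ (i,j)"
      and Me: "M = Tm g B"
      unfolding Sg_level_char by blast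
    define C where "C = mat g g (\<lambda>p. B $$ p div int d)"
    have Cc: "C \<in> carrier_mat g g" unfolding C_def by simp
    have Cs: "transpose_mat C = C" unfolding C_def
    proof (intro eq_matI)
      fix a b assume "a < dim_row (mat g g (\<lambda>p. B $$ p div int d))" "b < dim_col (mat g g (\<lambda>p. B $$ p div int d))"
      then have ab: "a < g" "b < g" by auto
      have "transpose_mat B $$ (a,b) = B $$ (b,a)" using ab B(1) by simp
      then have "B $$ (a,b) = B $$ (b,a)" unfolding B(2) .
      then show "transpose_mat (mat g g (\<lambda>p. B $$ p div int d)) $$ (a,b) = mat g g (\<lambda>p. B $$ p div int d) $$ (a,b)"
        using ab B by simp
    qed auto
    have "B = int d \<cdot>\<^sub>m C" unfolding C_def using B by (intro eq_matI) auto
    then show "M \<in> normal_closure (urSp_group g) {Y11 g ^\<^sub>m d}"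
      using reverse_aux[OF assms(1) Cc Cs] Me by simp
  qed
qed


end
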